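(* Let $\mathcal{S}=\{S_1,\dots,S_N\}\subset\mathbb{R}^Q_{\ge0}$ and suppose $\rho\notin\mathcal{P}$. Let $\eta\in\mathbb{R}^Q_{\ge0}$. There exists a diagonal matrix $\Delta$ with positive diagonal entries such that, under MaxWeight with matrix $\Delta$, $\lim_{t\to\infty}X(t)/t=\eta$, if and only if the following conditions hold: (1) $\eta=(\rho-\sum_m\alpha_mS_m)^+$ for some $\alpha_m\ge0$ with $\sum_m\alpha_m=1$; (2) there exists $v\in\mathbb{R}^Q_{\ge0}$ such that $\alpha_m>0$ implies $\langle v,S_m\rangle\ge\langle v,S_k\rangle$ for all $k$, and moreover $v_q=0$ if and only if $\eta_q=0$.
   Context: Model: $Q$ queues, discrete time. Arrivals $A(t)$ with $0\le A_q(t)\le\bar A_q<\infty$ and $\rho_q=\lim_{t\to\infty}\frac1t\sum_{s=0}^{t-1}A_q(s)\in(0,\infty)$. Departures $D_q(t)=\min\{S_q(t),X_q(t)\}$, $X(t+1)=X(t)+A(t)-D(t)$, $X(0)=0$. MaxWeight with matrix $\Delta$: $S(t)\in\arg\max_{S\in\mathcal{S}}\langle S,\Delta X(t)\rangle$. $(x)^+$ is the componentwise positive part. Stability region $\mathcal{P}=\{r\in\mathbb{R}^Q_{\ge0}: r\le\sum_n\alpha_nS_n\text{ for some }\alpha_n\ge0,\sum_n\alpha_n=1\}$. *)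

theory Defs
  imports "HOL-Analysis.Analysis"
begin

text \<open>Queues are indexed by a finite type 'q (so Q = CARD('q)); vectors are real^'q.
  The schedule set is S 0, ..., S (N-1).\<close>

definition pos_part :: "real^'q \<Rightarrow> real^'q" where
  "pos_part x = (\<chi> q. max 0 (x $ q))"

definition nonneg_vec :: "real^'q \<Rightarrow> bool" where
  "nonneg_vec x \<longleftrightarrow> (\<forall>q. 0 \<le> x $ q)"

definition stab_region :: "(nat \<Rightarrow> real^'q) \<Rightarrow> nat \<Rightarrow> (real^'q) set" where
  "stab_region S N = {r. nonneg_vec r \<and>
     (\<exists>\<alpha>::nat \<Rightarrow> real. (\<forall>n<N. 0 \<le> \<alpha> n) \<and> (\<Sum>n<N. \<alpha> n) = 1 \<and>
        (\<forall>q. r $ q \<le> (\<Sum>n<N. \<alpha> n *\<^sub>R S n) $ q))}"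

definition positive_diagonal :: "real^'q^'q \<Rightarrow> bool" where
  "positive_diagonal D \<longleftrightarrow> (\<forall>i j. i \<noteq> j \<longrightarrow> D $ i $ j = 0) \<and> (\<forall>i. 0 < D $ i $ i)"

text \<open>Ties may be broken arbitrarily.\<close>
definition maxweight_traj ::
  "(nat \<Rightarrow> real^'q) \<Rightarrow> nat \<Rightarrow> real^'q^'q \<Rightarrow> (nat \<Rightarrow> real^'q)
     \<Rightarrow> (nat \<Rightarrow> real^'q) \<Rightarrow> (nat \<Rightarrow> real^'q) \<Rightarrow> bool" where
  "maxweight_traj S N D A Sch X \<longleftrightarrow>
     X 0 = 0 \<and>
     (\<forall>t. (\<exists>n<N. Sch t = S n) \<and> (\<forall>k<N. inner (S k) (D *v X t) \<le> inner (Sch t) (D *v X t))) \<and>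
     (\<forall>t. X (Suc t) = X t + A t - (\<chi> q. min (Sch t $ q) (X t $ q)))"

end

theory Submission
  imports Defs
begin


lemma cesaro_aux:
  fixes b :: "nat \<Rightarrow> real"
  assumes lim: "(\<lambda>t. b t / real t) \<longlonglongrightarrow> 0"
  shows "(\<lambda>T. (real T * \<bar>b T\<bar> + (\<Sum>t<T. \<bar>b (Suc t)\<bar>)) / (real T)^2) \<longlonglongrightarrow> 0"
proof (rule LIMSEQ_I)
  fix r :: real assume r: "0 < r"
  define \<epsilon> where "\<epsilon> = r / 4"
  have e: "0 < \<epsilon>" using r by (simp add: \<epsilon>_def)
  obtain T0 where T0: "\<And>t. t \<ge> T0 \<Longrightarrow> norm (b t / real t - 0) < \<epsilon>"
    using LIMSEQ_D[OF lim e] by blast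
  define K where "K = (\<Sum>t<T0. \<bar>b (Suc t)\<bar>)"
  have K0: "0 \<le> K" unfolding K_def by (simp add: sum_nonneg)
  define no where "no = max (Suc T0) (max 1 (nat \<lceil>K / \<epsilon>\<rceil>))"
  show "\<exists>no. \<forall>n\<ge>no. norm ((real n * \<bar>b n\<bar> + (\<Sum>t<n. \<bar>b (Suc t)\<bar>)) / (real n)^2 - 0) < r"
  proof (intro exI allI impI)
    fix T assume T: "no \<le> T"
    have T0T: "T0 \<le> T" and T1: "1 \<le> T" using T by (auto simp: no_def)
    have Tpos: "0 < real T" using T1 by simp
    have KT: "K \<le> \<epsilon> * real T"
    proof -
      have "K / \<epsilon> \<le> real (nat \<lceil>K / \<epsilon>\<rceil>)" by linarith
      also have "\<dots> \<le> real T" using T by (simp add: no_def)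
      finally show ?thesis using e by (simp add: field_simps)
    qed
    have bt: "\<And>t. t \<ge> T0 \<Longrightarrow> t > 0 \<Longrightarrow> \<bar>b t\<bar> \<le> \<epsilon> * real t"
    proof -
      fix t assume "t \<ge> T0" "t > 0"
      then have "\<bar>b t / real t\<bar> < \<epsilon>" using T0 by simp
      then show "\<bar>b t\<bar> \<le> \<epsilon> * real t" using \<open>t > 0\<close> by (simp add: abs_div divide_less_eq)
    qed
    have bT: "\<bar>b T\<bar> \<le> \<epsilon> * real T" using bt T0T T1 by simp
    have split: "(\<Sum>t<T. \<bar>b (Suc t)\<bar>) = K + (\<Sum>t\<in>{T0..<T}. \<bar>b (Suc t)\<bar>)"
      unfolding K_def lessThan_atLeast0 using sum.atLeastLessThan_concat[OF _ T0T, of 0] by (metis le0)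
    have "(\<Sum>t\<in>{T0..<T}. \<bar>b (Suc t)\<bar>) \<le> (\<Sum>t\<in>{T0..<T}. \<epsilon> * real T)"
    proof (rule sum_mono)
      fix t assume "t \<in> {T0..<T}"
      then have "\<bar>b (Suc t)\<bar> \<le> \<epsilon> * real (Suc t)" using bt[of "Suc t"] by simp
      also have "\<dots> \<le> \<epsilon> * real T" using \<open>t \<in> {T0..<T}\<close> e by simp
      finally show "\<bar>b (Suc t)\<bar> \<le> \<epsilon> * real T" .
    qed
    also have "\<dots> \<le> \<epsilon> * real T * real T" using e T0T by (simp add: mult_right_mono of_nat_diff)
    finally have S2: "(\<Sum>t\<in>{T0..<T}. \<bar>b (Suc t)\<bar>) \<le> \<epsilon> * real T * real T" .
    have eT: "\<epsilon> * real T \<le> \<epsilon> * real T * real T" using e T1 by simp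
    have num: "real T * \<bar>b T\<bar> + (\<Sum>t<T. \<bar>b (Suc t)\<bar>) \<le> 3 * \<epsilon> * (real T)^2"
      using split S2 KT eT mult_left_mono[OF bT, of "real T"]
      by (simp add: power2_eq_square algebra_simps)
    have nn: "0 \<le> real T * \<bar>b T\<bar> + (\<Sum>t<T. \<bar>b (Suc t)\<bar>)" by (simp add: sum_nonneg)
    have "(real T * \<bar>b T\<bar> + (\<Sum>t<T. \<bar>b (Suc t)\<bar>)) / (real T)^2 \<le> 3 * \<epsilon>"
      using num Tpos by (simp add: divide_le_eq)
    then show "norm ((real T * \<bar>b T\<bar> + (\<Sum>t<T. \<bar>b (Suc t)\<bar>)) / (real T)^2 - 0) < r"
    proof -
      have "3 * \<epsilon> < r" using r by (simp add: \<epsilon>_def)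
      moreover have "0 \<le> (real T * \<bar>b T\<bar> + (\<Sum>t<T. \<bar>b (Suc t)\<bar>)) / (real T)^2" using nn by simp
      ultimately show ?thesis using \<open>_ \<le> 3 * \<epsilon>\<close> by simp
    qed
  qed
qed



lemma lyap:
  fixes x a s :: "nat \<Rightarrow> 'q::finite \<Rightarrow> real" and d eta rho sig v smax abar :: "'q \<Rightarrow> real"
  assumes x0: "\<And>q. x 0 q = 0"
    and step: "\<And>t q. x (Suc t) q = x t q + a t q - min (s t q) (x t q)"
    and s_b: "\<And>t q. 0 \<le> s t q \<and> s t q \<le> smax q"
    and a_b: "\<And>t q. 0 \<le> a t q \<and> a t q \<le> abar q"
    and d_pos: "\<And>q. 0 < d q"
    and eta_nn: "\<And>q. 0 \<le> eta q"
    and dv: "\<And>q. d q * eta q = v q"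
    and v_nn: "\<And>q. 0 \<le> v q"
    and mw1: "\<And>t. (\<Sum>q\<in>UNIV. d q * x t q * sig q) \<le> (\<Sum>q\<in>UNIV. d q * x t q * s t q)"
    and mw2: "\<And>t. (\<Sum>q\<in>UNIV. v q * s t q) \<le> (\<Sum>q\<in>UNIV. v q * sig q)"
    and eta: "\<And>q. eta q = max 0 (rho q - sig q)"
    and avg: "\<And>q. (\<lambda>T. (\<Sum>t<T. a t q) / real T) \<longlonglongrightarrow> rho q"
  shows "(\<lambda>T. x T q / real T) \<longlonglongrightarrow> eta q"
proof -
  have xnn: "0 \<le> x t q" for t q
  proof (induction t)
    case 0 then show ?case by (simp add: x0)
  next
    case (Suc t) then show ?case using step[of t q] a_b[of t q] by linarith
  qed
  define dep where "dep t q = min (s t q) (x t q)" for t q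
  define \<delta> where "\<delta> t q = a t q - dep t q - eta q" for t q
  define M where "M q = abar q + smax q + eta q" for q
  define e where "e t q = x t q - real t * eta q" for t q
  define C0 where "C0 = (\<Sum>q\<in>UNIV. d q * (smax q)^2)"
  define C1 where "C1 = 2 * C0 + (\<Sum>q\<in>UNIV. d q * (M q)^2)"
  define V where "V T = (\<Sum>q\<in>UNIV. d q * (e T q)^2)" for T
  define B where "B q T = (\<Sum>t<T. a t q - rho q)" for q T
  define G where "G q T = (\<Sum>t<T. e t q * (a t q - rho q))" for q T
  define H where "H q T = (real T * \<bar>B q T\<bar> + (\<Sum>t<T. \<bar>B q (Suc t)\<bar>)) / (real T)^2" for q T
  have dep_b: "0 \<le> dep t q \<and> dep t q \<le> s t q \<and> dep t q \<le> x t q" for t q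
    using s_b[of t q] xnn[of t q] by (simp add: dep_def)
  have \<delta>_b: "\<bar>\<delta> t q\<bar> \<le> M q" for t q
    using dep_b[of t q] s_b[of t q] a_b[of t q] eta_nn[of q] by (simp add: \<delta>_def M_def abs_le_iff)
  have M_nn: "0 \<le> M q" for q using \<delta>_b[of 0 q] by simp
  have e_step: "e (Suc t) q = e t q + \<delta> t q" for t q
    using step[of t q] by (simp add: e_def \<delta>_def dep_def algebra_simps)
  have e_b: "\<bar>e T q\<bar> \<le> M q * real T" for T q
  proof (induction T)
    case 0 then show ?case by (simp add: e_def x0)
  next
    case (Suc T) then show ?case using e_step[of T q] \<delta>_b[of T q] by (simp add: algebra_simps)
  qed
  have s4: "(\<Sum>q\<in>UNIV. d q * e t q * \<delta> t q) \<le> (\<Sum>q\<in>UNIV. d q * e t q * (a t q - rho q)) + C0" for t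
  proof -
    have "(\<Sum>q\<in>UNIV. d q * e t q * \<delta> t q) = (\<Sum>q\<in>UNIV. d q * e t q * (a t q - rho q) + d q * e t q * (rho q - eta q - sig q) + d q * x t q * (sig q - dep t q) - real t * (v q * (sig q - dep t q)))"
      by (rule sum.cong) (auto simp: e_def \<delta>_def dv[symmetric] algebra_simps)
    also have "\<dots> = (\<Sum>q\<in>UNIV. d q * e t q * (a t q - rho q)) + (\<Sum>q\<in>UNIV. d q * e t q * (rho q - eta q - sig q)) + (\<Sum>q\<in>UNIV. d q * x t q * (sig q - dep t q)) - real t * (\<Sum>q\<in>UNIV. v q * (sig q - dep t q))"
      by (simp only: sum.distrib sum_subtractf sum_distrib_left)
    also have "\<dots> \<le> (\<Sum>q\<in>UNIV. d q * e t q * (a t q - rho q)) + 0 + C0 - 0"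
    proof -
      have P1: "(\<Sum>q\<in>UNIV. d q * e t q * (rho q - eta q - sig q)) \<le> 0"
      proof (rule sum_nonpos)
        fix q
        show "d q * e t q * (rho q - eta q - sig q) \<le> 0"
        proof (cases "eta q = 0")
          case True
          then have "rho q - sig q \<le> 0" using eta[of q] by (simp add: max_def split: if_splits)
          moreover have "0 \<le> d q * e t q" using True xnn[of t q] d_pos[of q] by (simp add: e_def)
          ultimately show ?thesis using True by (simp add: mult_nonneg_nonpos)
        next
          case False
          then have "eta q = rho q - sig q" using eta[of q] by (simp add: max_def split: if_splits)
          then show ?thesis by simp
        qed
      qed
      have P2a: "(\<Sum>q\<in>UNIV. d q * x t q * (sig q - dep t q)) \<le> (\<Sum>q\<in>UNIV. d q * x t q * (s t q - dep t q))"
        using mw1[of t] by (simp add: right_diff_distrib sum_subtractf)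
      have P2b: "(\<Sum>q\<in>UNIV. d q * x t q * (s t q - dep t q)) \<le> C0"
        unfolding C0_def
      proof (rule sum_mono)
        fix q
        have "x t q * (s t q - dep t q) \<le> (smax q)^2"
        proof (cases "x t q \<le> s t q")
          case True
          then have "x t q * (s t q - dep t q) = x t q * (s t q - x t q)" by (simp add: dep_def)
          also have "\<dots> \<le> s t q * s t q" using True xnn[of t q] by (intro mult_mono) auto
          also have "\<dots> \<le> smax q * smax q" using s_b[of t q] by (intro mult_mono) auto
          finally show ?thesis by (simp add: power2_eq_square)
        next
          case False
          then show ?thesis by (simp add: dep_def)
        qed
        then show "d q * x t q * (s t q - dep t q) \<le> d q * (smax q)^2"
          using d_pos[of q] by (simp add: mult.assoc mult_left_mono)
      qed
      have P3: "0 \<le> (\<Sum>q\<in>UNIV. v q * (sig q - dep t q))"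
      proof -
        have "(\<Sum>q\<in>UNIV. v q * (sig q - s t q)) \<le> (\<Sum>q\<in>UNIV. v q * (sig q - dep t q))"
          using dep_b v_nn by (intro sum_mono mult_left_mono) auto
        moreover have "0 \<le> (\<Sum>q\<in>UNIV. v q * (sig q - s t q))"
          using mw2[of t] by (simp add: right_diff_distrib sum_subtractf)
        ultimately show ?thesis by linarith
      qed
      have "0 \<le> real t * (\<Sum>q\<in>UNIV. v q * (sig q - dep t q))" using P3 by simp
      then show ?thesis using P1 P2a P2b by linarith
    qed
    finally show ?thesis by simp
  qed
  have s5: "V (Suc t) \<le> V t + 2 * (\<Sum>q\<in>UNIV. d q * e t q * (a t q - rho q)) + C1" for t
  proof -
    have "V (Suc t) = (\<Sum>q\<in>UNIV. d q * (e t q)^2 + 2 * (d q * e t q * \<delta> t q) + d q * (\<delta> t q)^2)"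
      unfolding V_def by (rule sum.cong) (auto simp: e_step power2_eq_square algebra_simps)
    also have "\<dots> = V t + 2 * (\<Sum>q\<in>UNIV. d q * e t q * \<delta> t q) + (\<Sum>q\<in>UNIV. d q * (\<delta> t q)^2)"
      unfolding V_def by (simp only: sum.distrib sum_distrib_left)
    also have "(\<Sum>q\<in>UNIV. d q * (\<delta> t q)^2) \<le> (\<Sum>q\<in>UNIV. d q * (M q)^2)"
    proof (rule sum_mono)
      fix q
      have "(\<delta> t q)^2 \<le> (M q)^2" using \<delta>_b[of t q] by (metis abs_ge_zero power2_abs power_mono)
      then show "d q * (\<delta> t q)^2 \<le> d q * (M q)^2" using d_pos[of q] by simp
    qed
    finally show ?thesis using s4[of t] by (simp add: C1_def)
  qed
  have s6: "V T \<le> 2 * (\<Sum>q\<in>UNIV. d q * G q T) + C1 * real T" for T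
  proof (induction T)
    case 0 then show ?case by (simp add: V_def e_def x0 G_def)
  next
    case (Suc T)
    have "(\<Sum>q\<in>UNIV. d q * G q (Suc T)) = (\<Sum>q\<in>UNIV. d q * G q T) + (\<Sum>q\<in>UNIV. d q * e T q * (a T q - rho q))"
      by (simp add: G_def sum.distrib distrib_left mult.assoc)
    then show ?case using Suc s5[of T] by (simp add: algebra_simps)
  qed
  have s7: "G q T = e T q * B q T - (\<Sum>t<T. \<delta> t q * B q (Suc t))" for q T
  proof (induction T)
    case 0 then show ?case by (simp add: G_def B_def)
  next
    case (Suc T)
    have "B q (Suc (Suc T)) = B q (Suc T) + (a (Suc T) q - rho q)" by (simp add: B_def)
    show ?case using Suc by (simp add: G_def B_def e_step algebra_simps)
  qed
  have s8: "\<bar>G q T\<bar> \<le> M q * (real T * \<bar>B q T\<bar> + (\<Sum>t<T. \<bar>B q (Suc t)\<bar>))" for q T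
  proof -
    have "\<bar>e T q * B q T\<bar> \<le> M q * real T * \<bar>B q T\<bar>"
      using e_b[of T q] by (simp add: abs_mult mult_right_mono)
    moreover have "\<bar>\<Sum>t<T. \<delta> t q * B q (Suc t)\<bar> \<le> M q * (\<Sum>t<T. \<bar>B q (Suc t)\<bar>)"
    proof -
      have "\<bar>\<Sum>t<T. \<delta> t q * B q (Suc t)\<bar> \<le> (\<Sum>t<T. \<bar>\<delta> t q * B q (Suc t)\<bar>)" by (rule sum_abs)
      also have "\<dots> \<le> (\<Sum>t<T. M q * \<bar>B q (Suc t)\<bar>)"
        using \<delta>_b by (intro sum_mono) (simp add: abs_mult mult_right_mono)
      finally show ?thesis by (simp add: sum_distrib_left)
    qed
    ultimately show ?thesis using s7[of q T] by (simp add: algebra_simps abs_le_iff)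
  qed
  have s9: "(\<lambda>T. B q T / real T) \<longlonglongrightarrow> 0" for q
  proof -
    have "(\<lambda>T. (\<Sum>t<T. a t q) / real T - rho q) \<longlonglongrightarrow> rho q - rho q"
      by (intro tendsto_intros avg)
    moreover have "\<forall>\<^sub>F T in sequentially. (\<Sum>t<T. a t q) / real T - rho q = B q T / real T"
      using eventually_gt_at_top[of "0::nat"]
      by eventually_elim (simp add: B_def sum_subtractf field_simps)
    ultimately show ?thesis by (simp add: Lim_transform_eventually)
  qed
  have s10: "(\<lambda>T. H q T) \<longlonglongrightarrow> 0" for q
    unfolding H_def by (rule cesaro_aux[OF s9])
  have s11: "(\<lambda>T. V T / (real T)^2) \<longlonglongrightarrow> 0"
  proof (rule real_tendsto_sandwich)
    show "\<forall>\<^sub>F T in sequentially. 0 \<le> V T / (real T)^2"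
      by (simp add: V_def sum_nonneg d_pos less_imp_le)
    show "(\<lambda>T. 0) \<longlonglongrightarrow> (0::real)" by simp
    show "(\<lambda>T. 2 * (\<Sum>q\<in>UNIV. d q * M q * H q T) + C1 / real T) \<longlonglongrightarrow> 0"
      using tendsto_add[OF tendsto_mult[OF tendsto_const tendsto_sum[OF tendsto_mult[OF tendsto_const s10]]] lim_const_over_n[of C1]]
      by simp
    show "\<forall>\<^sub>F T in sequentially. V T / (real T)^2 \<le> 2 * (\<Sum>q\<in>UNIV. d q * M q * H q T) + C1 / real T"
      using eventually_gt_at_top[of "0::nat"]
    proof eventually_elim
      case (elim T)
      have "V T \<le> 2 * (\<Sum>q\<in>UNIV. d q * M q * (real T * \<bar>B q T\<bar> + (\<Sum>t<T. \<bar>B q (Suc t)\<bar>))) + C1 * real T"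
      proof -
        have "(\<Sum>q\<in>UNIV. d q * G q T) \<le> (\<Sum>q\<in>UNIV. d q * M q * (real T * \<bar>B q T\<bar> + (\<Sum>t<T. \<bar>B q (Suc t)\<bar>)))"
        proof (rule sum_mono)
          fix q
          have "d q * G q T \<le> d q * \<bar>G q T\<bar>" using d_pos[of q] by (simp add: mult_left_mono)
          also have "\<dots> \<le> d q * (M q * (real T * \<bar>B q T\<bar> + (\<Sum>t<T. \<bar>B q (Suc t)\<bar>)))"
            using d_pos[of q] s8[of q T] by (simp add: mult_left_mono)
          finally show "d q * G q T \<le> d q * M q * (real T * \<bar>B q T\<bar> + (\<Sum>t<T. \<bar>B q (Suc t)\<bar>))"
            by (simp add: mult.assoc)
        qed
        then show ?thesis using s6[of T] by linarith
      qed
      then have "V T / (real T)^2 \<le> (2 * (\<Sum>q\<in>UNIV. d q * M q * (real T * \<bar>B q T\<bar> + (\<Sum>t<T. \<bar>B q (Suc t)\<bar>))) + C1 * real T) / (real T)^2"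
        by (simp add: divide_right_mono)
      also have "\<dots> = 2 * (\<Sum>q\<in>UNIV. d q * M q * H q T) + C1 / real T"
      proof -
        have eq: "(\<Sum>q\<in>UNIV. d q * M q * H q T) = (\<Sum>q\<in>UNIV. d q * M q * (real T * \<bar>B q T\<bar> + (\<Sum>t<T. \<bar>B q (Suc t)\<bar>))) / (real T)^2"
          by (simp add: H_def sum_divide_distrib)
        show ?thesis unfolding eq using elim by (simp add: field_simps power2_eq_square)
      qed
      finally show ?case .
    qed
  qed
  have s12: "(\<lambda>T. (e T q / real T)^2) \<longlonglongrightarrow> 0"
  proof (rule real_tendsto_sandwich)
    show "\<forall>\<^sub>F T in sequentially. 0 \<le> (e T q / real T)^2" by simp
    show "(\<lambda>T. 0) \<longlonglongrightarrow> (0::real)" by simp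
    show "(\<lambda>T. V T / (real T)^2 / d q) \<longlonglongrightarrow> 0"
      using tendsto_divide_zero[OF s11, of "d q"] by simp
    show "\<forall>\<^sub>F T in sequentially. (e T q / real T)^2 \<le> V T / (real T)^2 / d q"
    proof (rule always_eventually, rule allI)
      fix T
      have "d q * (e T q)^2 \<le> V T" unfolding V_def
        by (rule member_le_sum[of q UNIV "\<lambda>q. d q * (e T q)^2"]) (auto simp: d_pos less_imp_le)
      then have "(e T q)^2 \<le> V T / d q" using d_pos[of q] by (simp add: field_simps)
      then have "(e T q)^2 / (real T)^2 \<le> V T / d q / (real T)^2" using divide_right_mono[OF _ zero_le_power2[of "real T"]] by blast
      then show "(e T q / real T)^2 \<le> V T / (real T)^2 / d q" by (simp add: power_divide field_simps)
    qed
  qed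
  have s13: "(\<lambda>T. e T q / real T) \<longlonglongrightarrow> 0"
  proof -
    have "(\<lambda>T. sqrt ((e T q / real T)^2)) \<longlonglongrightarrow> sqrt 0" by (intro tendsto_intros s12)
    then have "(\<lambda>T. \<bar>e T q / real T\<bar>) \<longlonglongrightarrow> 0" by simp
    then show ?thesis by (simp only: tendsto_rabs_zero_iff)
  qed
  have "(\<lambda>T. e T q / real T + eta q) \<longlonglongrightarrow> 0 + eta q" by (intro tendsto_intros s13)
  moreover have "\<forall>\<^sub>F T in sequentially. e T q / real T + eta q = x T q / real T"
    using eventually_gt_at_top[of "0::nat"]
    by eventually_elim (simp add: e_def field_simps)
  ultimately show ?thesis by (simp add: Lim_transform_eventually)
qed



lemma inner_vec_sum: "inner (x::real^'n) y = (\<Sum>i\<in>UNIV. x $ i * y $ i)"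
  by (simp add: inner_vec_def)

lemma diag_mult: "(\<chi> i j. if i = j then d i else 0) *v (x::real^'n) = (\<chi> i. d i * x $ i)"
proof -
  have "(\<Sum>j\<in>UNIV. (if i = j then d i else 0) * x $ j) = d i * x $ i" for i
    by (subst sum.cong[OF refl, of _ _ "\<lambda>j. if i = j then d i * x $ j else 0"]) auto
  then show ?thesis by (simp add: vec_eq_iff matrix_vector_mult_def)
qed

lemma if_dir:
  fixes S :: "nat \<Rightarrow> real^'q" and N :: nat
    and A :: "nat \<Rightarrow> real^'q" and Abar \<rho> \<eta> :: "real^'q" and \<alpha> :: "nat \<Rightarrow> real" and v :: "real^'q"
  assumes N_pos: "0 < N"
    and S_nonneg: "\<forall>n<N. nonneg_vec (S n)"
    and A_bounds: "\<forall>t q. 0 \<le> A t $ q \<and> A t $ q \<le> Abar $ q"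
    and rho_lim: "(\<lambda>t. (1 / real t) *\<^sub>R (\<Sum>s<t. A s)) \<longlonglongrightarrow> \<rho>"
    and eta_nonneg: "nonneg_vec \<eta>"
    and al_nn: "\<forall>m<N. 0 \<le> \<alpha> m" and al_sum: "(\<Sum>m<N. \<alpha> m) = 1"
    and eta_eq: "\<eta> = pos_part (\<rho> - (\<Sum>m<N. \<alpha> m *\<^sub>R S m))"
    and v_nn: "nonneg_vec v"
    and v_face: "\<forall>m<N. 0 < \<alpha> m \<longrightarrow> (\<forall>k<N. inner v (S k) \<le> inner v (S m))"
    and v_zero: "\<forall>q. v $ q = 0 \<longleftrightarrow> \<eta> $ q = 0"
  shows "\<exists>D. positive_diagonal D \<and>
            (\<forall>Sch X. maxweight_traj S N D A Sch X \<longrightarrow>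
               (\<lambda>t. (1 / real t) *\<^sub>R X t) \<longlonglongrightarrow> \<eta>)"
proof -
  define \<sigma> where "\<sigma> = (\<Sum>m<N. \<alpha> m *\<^sub>R S m)"
  define d where "d q = (if \<eta> $ q = 0 then 1 else v $ q / \<eta> $ q)" for q
  define D :: "real^'q^'q" where "D = (\<chi> i j. if i = j then d i else 0)"
  have d_pos: "0 < d q" for q
  proof (cases "\<eta> $ q = 0")
    case False
    then have "v $ q \<noteq> 0" using v_zero by blast
    then have "0 < v $ q" using v_nn by (metis nonneg_vec_def order_le_less)
    moreover have "0 < \<eta> $ q" using False eta_nonneg by (metis nonneg_vec_def order_le_less)
    ultimately show ?thesis using False by (simp add: d_def)
  qed (simp add: d_def)
  have dv: "d q * \<eta> $ q = v $ q" for q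
    using v_zero by (cases "\<eta> $ q = 0") (auto simp: d_def)
  have Dmul: "D *v x = (\<chi> i. d i * x $ i)" for x unfolding D_def by (rule diag_mult)
  have posD: "positive_diagonal D" unfolding positive_diagonal_def D_def using d_pos by simp
  define smax where "smax q = Max ((\<lambda>n. S n $ q) ` {..<N})" for q
  have S_le: "n < N \<Longrightarrow> S n $ q \<le> smax q" for n q
    unfolding smax_def by (rule Max_ge) auto
  have sig_in: "inner \<sigma> w \<le> inner (S n) w" if n_max: "\<forall>k<N. inner (S k) w \<le> inner (S n) w" for w n
  proof -
    have "inner \<sigma> w = (\<Sum>m<N. \<alpha> m * inner (S m) w)" by (simp add: \<sigma>_def inner_sum_left)
    also have "\<dots> \<le> (\<Sum>m<N. \<alpha> m * inner (S n) w)"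
      using al_nn n_max by (intro sum_mono mult_left_mono) auto
    also have "\<dots> = inner (S n) w" using al_sum by (simp add: sum_distrib_right[symmetric])
    finally show ?thesis .
  qed
  have v_sig: "inner v (S n) \<le> inner v \<sigma>" if "n < N" for n
  proof -
    have "inner v (S n) = (\<Sum>m<N. \<alpha> m * inner v (S n))" using al_sum by (simp add: sum_distrib_right[symmetric])
    also have "\<dots> \<le> (\<Sum>m<N. \<alpha> m * inner v (S m))"
    proof (rule sum_mono)
      fix m assume "m \<in> {..<N}"
      then show "\<alpha> m * inner v (S n) \<le> \<alpha> m * inner v (S m)"
      proof (cases "\<alpha> m = 0")
        case False
        then have "0 < \<alpha> m" using al_nn \<open>m \<in> {..<N}\<close> by (metis lessThan_iff order_le_less)
        then have "inner v (S n) \<le> inner v (S m)" using v_face \<open>m \<in> {..<N}\<close> that by auto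
        then show ?thesis using \<open>0 < \<alpha> m\<close> by (simp add: mult_left_mono)
      qed simp
    qed
    also have "\<dots> = inner v \<sigma>" by (simp add: \<sigma>_def inner_sum_right)
    finally show ?thesis .
  qed
  show ?thesis
  proof (intro exI conjI allI impI)
    show "positive_diagonal D" by (rule posD)
    fix Sch X assume tr: "maxweight_traj S N D A Sch X"
    have X0: "X 0 = 0" and mw: "\<And>t. (\<exists>n<N. Sch t = S n) \<and> (\<forall>k<N. inner (S k) (D *v X t) \<le> inner (Sch t) (D *v X t))"
      and stp: "\<And>t. X (Suc t) = X t + A t - (\<chi> q. min (Sch t $ q) (X t $ q))"
      using tr unfolding maxweight_traj_def by blast+
    show "(\<lambda>t. (1 / real t) *\<^sub>R X t) \<longlonglongrightarrow> \<eta>"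
    proof (rule vec_tendstoI)
      fix q
      have L: "(\<lambda>T. X T $ q / real T) \<longlonglongrightarrow> \<eta> $ q"
      proof (rule lyap[where x="\<lambda>t q. X t $ q" and a="\<lambda>t q. A t $ q" and s="\<lambda>t q. Sch t $ q"
            and d=d and eta="\<lambda>q. \<eta> $ q" and rho="\<lambda>q. \<rho> $ q" and sig="\<lambda>q. \<sigma> $ q"
            and v="\<lambda>q. v $ q" and smax=smax and abar="\<lambda>q. Abar $ q"])
        show "\<And>q. X 0 $ q = 0" using X0 by simp
        show "\<And>t q. X (Suc t) $ q = X t $ q + A t $ q - min (Sch t $ q) (X t $ q)" using stp by simp
        show "\<And>t q. 0 \<le> Sch t $ q \<and> Sch t $ q \<le> smax q"
          using mw S_nonneg S_le unfolding nonneg_vec_def by metis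
        show "\<And>t q. 0 \<le> A t $ q \<and> A t $ q \<le> Abar $ q" using A_bounds by blast
        show "\<And>q. 0 < d q" by (rule d_pos)
        show "\<And>q. 0 \<le> \<eta> $ q" using eta_nonneg by (simp add: nonneg_vec_def)
        show "\<And>q. d q * \<eta> $ q = v $ q" by (rule dv)
        show "\<And>q. 0 \<le> v $ q" using v_nn by (simp add: nonneg_vec_def)
        show "(\<Sum>q\<in>UNIV. d q * X t $ q * \<sigma> $ q) \<le> (\<Sum>q\<in>UNIV. d q * X t $ q * Sch t $ q)" for t
        proof -
          obtain n where n: "n < N" "Sch t = S n" using mw[of t] by blast
          have "inner \<sigma> (D *v X t) \<le> inner (Sch t) (D *v X t)"
            using sig_in[of "D *v X t" n] mw[of t] n by simp
          then show ?thesis by (simp add: inner_vec_sum Dmul algebra_simps)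
        qed
        show "(\<Sum>q\<in>UNIV. v $ q * Sch t $ q) \<le> (\<Sum>q\<in>UNIV. v $ q * \<sigma> $ q)" for t
        proof -
          obtain n where n: "n < N" "Sch t = S n" using mw[of t] by blast
          then show ?thesis using v_sig[of n] by (simp add: inner_vec_sum)
        qed
        show "\<And>q. \<eta> $ q = max 0 (\<rho> $ q - \<sigma> $ q)"
          using eta_eq by (simp add: pos_part_def \<sigma>_def)
        show "(\<lambda>T. (\<Sum>t<T. A t $ q) / real T) \<longlonglongrightarrow> \<rho> $ q" for q
          using tendsto_vec_nth[OF rho_lim, of q] by simp
      qed
      then show "(\<lambda>T. ((1 / real T) *\<^sub>R X T) $ q) \<longlonglongrightarrow> \<eta> $ q" by simp
    qed
  qed
qed



lemma argmax_exists:
  fixes f :: "nat \<Rightarrow> real"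
  assumes "0 < N"
  shows "\<exists>n<N. \<forall>k<N. f k \<le> f n"
proof -
  have fin: "finite (f ` {..<N})" and ne: "f ` {..<N} \<noteq> {}" using assms by auto
  obtain n where n: "n < N" "f n = Max (f ` {..<N})" using Max_in[OF fin ne] by auto
  have "\<forall>k<N. f k \<le> f n" using n Max_ge[OF fin] by auto
  then show ?thesis using n by blast
qed

lemma hull_repr:
  fixes S :: "nat \<Rightarrow> 'a::real_vector"
  assumes fin: "finite I" and y: "y \<in> convex hull (S ` I)"
  shows "\<exists>\<alpha>::nat\<Rightarrow>real. (\<forall>m. 0 \<le> \<alpha> m) \<and> (\<forall>m. m \<notin> I \<longrightarrow> \<alpha> m = 0) \<and> sum \<alpha> I = 1 \<and> (\<Sum>m\<in>I. \<alpha> m *\<^sub>R S m) = y"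
proof -
  define T where "T = {y. \<exists>\<alpha>::nat\<Rightarrow>real. (\<forall>m. 0 \<le> \<alpha> m) \<and> (\<forall>m. m \<notin> I \<longrightarrow> \<alpha> m = 0) \<and> sum \<alpha> I = 1 \<and> (\<Sum>m\<in>I. \<alpha> m *\<^sub>R S m) = y}"
  have sub: "S ` I \<subseteq> T"
  proof
    fix z assume "z \<in> S ` I"
    then obtain i where i: "i \<in> I" "z = S i" by blast
    define \<alpha> :: "nat \<Rightarrow> real" where "\<alpha> m = (if m = i then 1 else 0)" for m
    have "sum \<alpha> I = 1" using i fin by (simp add: \<alpha>_def)
    moreover have "(\<Sum>m\<in>I. \<alpha> m *\<^sub>R S m) = z"
    proof -
      have "(\<Sum>m\<in>I. \<alpha> m *\<^sub>R S m) = (\<Sum>m\<in>I. if m = i then S m else 0)"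
        by (rule sum.cong) (auto simp: \<alpha>_def)
      also have "\<dots> = S i" using i fin by simp
      finally show ?thesis using i by simp
    qed
    ultimately show "z \<in> T" unfolding T_def using i by (auto simp: \<alpha>_def intro!: exI[of _ \<alpha>])
  qed
  have cvx: "convex T"
  proof (rule convexI)
    fix x z and u v :: real assume x: "x \<in> T" and z: "z \<in> T" and u: "0 \<le> u" and v: "0 \<le> v" and uv: "u + v = 1"
    obtain \<alpha> where a: "\<forall>m. 0 \<le> \<alpha> m" "\<forall>m. m \<notin> I \<longrightarrow> \<alpha> m = 0" "sum \<alpha> I = 1" "(\<Sum>m\<in>I. \<alpha> m *\<^sub>R S m) = x"
      using x unfolding T_def by blast
    obtain \<beta> where b: "\<forall>m. 0 \<le> \<beta> m" "\<forall>m. m \<notin> I \<longrightarrow> \<beta> m = 0" "sum \<beta> I = 1" "(\<Sum>m\<in>I. \<beta> m *\<^sub>R S m) = z"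
      using z unfolding T_def by blast
    define \<gamma> where "\<gamma> m = u * \<alpha> m + v * \<beta> m" for m
    have "\<forall>m. 0 \<le> \<gamma> m" using a b u v by (simp add: \<gamma>_def)
    moreover have "\<forall>m. m \<notin> I \<longrightarrow> \<gamma> m = 0" using a b by (simp add: \<gamma>_def)
    moreover have "sum \<gamma> I = 1" using a b uv by (simp add: \<gamma>_def sum.distrib sum_distrib_left[symmetric])
    moreover have "(\<Sum>m\<in>I. \<gamma> m *\<^sub>R S m) = u *\<^sub>R x + v *\<^sub>R z"
      unfolding a(4)[symmetric] b(4)[symmetric]
      by (simp add: \<gamma>_def scaleR_add_left sum.distrib scaleR_sum_right)
    ultimately show "u *\<^sub>R x + v *\<^sub>R z \<in> T" unfolding T_def by blast
  qed
  have "convex hull (S ` I) \<subseteq> T" using hull_minimal[of "S ` I" T convex] sub cvx by blast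
  then show ?thesis using y unfolding T_def by blast
qed



lemma posdiag_mult:
  assumes "positive_diagonal D"
  shows "(D *v (x::real^'n)) $ i = D $ i $ i * x $ i"
proof -
  have "(\<Sum>j\<in>UNIV. D $ i $ j * x $ j) = (\<Sum>j\<in>UNIV. if j = i then D $ i $ i * x $ j else 0)"
    using assms unfolding positive_diagonal_def by (intro sum.cong) auto
  then show ?thesis by (simp add: matrix_vector_mult_def)
qed

lemma from_traj:
  fixes S :: "nat \<Rightarrow> real^'q" and N :: nat
    and A :: "nat \<Rightarrow> real^'q" and Abar \<rho> \<eta> :: "real^'q"
  assumes N_pos: "0 < N"
    and S_nonneg: "\<forall>n<N. nonneg_vec (S n)"
    and A_bounds: "\<forall>t q. 0 \<le> A t $ q \<and> A t $ q \<le> Abar $ q"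
    and rho_lim: "(\<lambda>t. (1 / real t) *\<^sub>R (\<Sum>s<t. A s)) \<longlonglongrightarrow> \<rho>"
    and eta_nonneg: "nonneg_vec \<eta>"
    and posD: "positive_diagonal D"
    and tr: "maxweight_traj S N D A Sch X"
    and conv: "(\<lambda>t. (1 / real t) *\<^sub>R X t) \<longlonglongrightarrow> \<eta>"
  shows "\<exists>\<alpha>::nat \<Rightarrow> real. (\<forall>m<N. 0 \<le> \<alpha> m) \<and> (\<Sum>m<N. \<alpha> m) = 1 \<and>
            \<eta> = pos_part (\<rho> - (\<Sum>m<N. \<alpha> m *\<^sub>R S m)) \<and>
            (\<exists>v. nonneg_vec v \<and>
               (\<forall>m<N. 0 < \<alpha> m \<longrightarrow> (\<forall>k<N. inner v (S k) \<le> inner v (S m))) \<and>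
               (\<forall>q. v $ q = 0 \<longleftrightarrow> \<eta> $ q = 0))"
proof -
  have X0: "X 0 = 0" and mw: "\<And>t. (\<exists>n<N. Sch t = S n) \<and> (\<forall>k<N. inner (S k) (D *v X t) \<le> inner (Sch t) (D *v X t))"
    and stp: "\<And>t. X (Suc t) = X t + A t - (\<chi> q. min (Sch t $ q) (X t $ q))"
    using tr unfolding maxweight_traj_def by blast+
  have Dd: "0 < D $ i $ i" for i using posD unfolding positive_diagonal_def by blast
  define v where "v = D *v \<eta>"
  have vq: "v $ q = D $ q $ q * \<eta> $ q" for q unfolding v_def by (rule posdiag_mult[OF posD])
  have v_nn: "nonneg_vec v" using eta_nonneg Dd by (simp add: nonneg_vec_def vq less_imp_le)
  have v_zero: "v $ q = 0 \<longleftrightarrow> \<eta> $ q = 0" for q using Dd[of q] by (simp add: vq)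
  define F where "F = {m. m < N \<and> (\<forall>k<N. inner v (S k) \<le> inner v (S m))}"
  have finF: "finite F" and FN: "F \<subseteq> {..<N}" by (auto simp: F_def)
  obtain m0 where m0: "m0 \<in> F" using argmax_exists[OF N_pos, of "\<lambda>k. inner v (S k)"] by (auto simp: F_def)
  have xnn: "0 \<le> X t $ q" for t q
  proof (induction t)
    case 0 then show ?case by (simp add: X0)
  next
    case (Suc t)
    have "0 \<le> A t $ q" using A_bounds by blast
    then show ?case using stp[of t] Suc by (simp add: min_def)
  qed
  define smax where "smax q = Max ((\<lambda>n. S n $ q) ` {..<N})" for q
  have Sch_b: "0 \<le> Sch t $ q \<and> Sch t $ q \<le> smax q" for t q
  proof -
    obtain n where n: "n < N" "Sch t = S n" using mw[of t] by blast
    have "S n $ q \<le> smax q" unfolding smax_def using n by (intro Max_ge) auto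
    then show ?thesis using n S_nonneg by (auto simp: nonneg_vec_def)
  qed
  have ev: "\<forall>\<^sub>F t in sequentially. \<exists>n\<in>F. Sch t = S n"
  proof -
    have DX: "(\<lambda>t. D *v ((1 / real t) *\<^sub>R X t)) \<longlonglongrightarrow> v"
    proof (rule vec_tendstoI)
      fix i
      have "(\<lambda>t. D $ i $ i * ((1 / real t) *\<^sub>R X t) $ i) \<longlonglongrightarrow> D $ i $ i * \<eta> $ i"
        by (intro tendsto_intros conv)
      then show "(\<lambda>t. (D *v ((1 / real t) *\<^sub>R X t)) $ i) \<longlonglongrightarrow> v $ i"
        by (simp add: posdiag_mult[OF posD] vq)
    qed
    have "\<forall>k\<in>{..<N} - F. \<forall>\<^sub>F t in sequentially. Sch t \<noteq> S k"
    proof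
      fix k assume k: "k \<in> {..<N} - F"
      then obtain m where m: "m < N" "inner v (S k) < inner v (S m)" by (auto simp: F_def not_le)
      have "(\<lambda>t. inner (S k - S m) (D *v ((1 / real t) *\<^sub>R X t))) \<longlonglongrightarrow> inner (S k - S m) v"
        by (intro tendsto_intros DX)
      moreover have "inner (S k - S m) v < 0" using m by (simp add: inner_diff_left inner_diff_right inner_commute)
      ultimately have "\<forall>\<^sub>F t in sequentially. inner (S k - S m) (D *v ((1 / real t) *\<^sub>R X t)) < 0"
        by (rule order_tendstoD(2))
      then show "\<forall>\<^sub>F t in sequentially. Sch t \<noteq> S k"
        using eventually_gt_at_top[of "0::nat"]
      proof eventually_elim
        case (elim t)
        have "inner (S k - S m) (D *v ((1 / real t) *\<^sub>R X t)) = (1 / real t) * (inner (S k) (D *v X t) - inner (S m) (D *v X t))"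
          by (simp add: matrix_vector_mult_scaleR inner_diff_left)
        then have "inner (S k) (D *v X t) < inner (S m) (D *v X t)"
          using elim by (simp add: divide_less_0_iff)
        also have "\<dots> \<le> inner (Sch t) (D *v X t)" using mw[of t] m by blast
        finally show ?case by auto
      qed
    qed
    then have "\<forall>\<^sub>F t in sequentially. \<forall>k\<in>{..<N} - F. Sch t \<noteq> S k"
      by (rule eventually_ball_finite[rotated]) simp
    then show ?thesis
    proof eventually_elim
      case (elim t)
      obtain n where n: "n < N" "Sch t = S n" using mw[of t] by blast
      then have "n \<in> F" using elim by blast
      then show ?case using n by blast
    qed
  qed
  then obtain T1 where T1: "\<And>t. t \<ge> T1 \<Longrightarrow> \<exists>n\<in>F. Sch t = S n" by (auto simp: eventually_sequentially)
  define Sch' where "Sch' t = (if T1 \<le> t then Sch t else S m0)" for t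
  have Sch'_in: "Sch' t \<in> S ` F" for t using T1 m0 by (auto simp: Sch'_def)
  have Sch'_eq: "t \<ge> T1 \<Longrightarrow> Sch' t = Sch t" for t by (simp add: Sch'_def)
  define K where "K = convex hull (S ` F)"
  have cK: "compact K" unfolding K_def using finF by (intro compact_convex_hull finite_imp_compact) simp
  have cvK: "convex K" unfolding K_def by simp
  define avg where "avg T = (\<Sum>t<Suc T. (1 / real (Suc T)) *\<^sub>R Sch' t)" for T
  have avg_in: "avg T \<in> K" for T
    unfolding avg_def
  proof (rule convex_sum[OF _ cvK])
    show "(\<Sum>t<Suc T. 1 / real (Suc T)) = 1" by simp
  qed (auto simp: K_def Sch'_in hull_inc)
  obtain \<sigma> r where \<sigma>K: "\<sigma> \<in> K" and r: "strict_mono r" and lim_r: "(avg \<circ> r) \<longlonglongrightarrow> \<sigma>"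
    using compact_imp_seq_compact[OF cK] avg_in unfolding seq_compact_def by metis
  define R where "R j = Suc (r j)" for j
  have R: "strict_mono R" using r by (simp add: R_def strict_mono_def)
  have Rge: "j \<le> R j" for j using seq_suble[OF R] .
  have limX: "(\<lambda>j. X (R j) $ q / real (R j)) \<longlonglongrightarrow> \<eta> $ q" for q
  proof -
    have "(\<lambda>t. ((1 / real t) *\<^sub>R X t) $ q) \<longlonglongrightarrow> \<eta> $ q" by (intro tendsto_intros conv)
    from LIMSEQ_subseq_LIMSEQ[OF this R] show ?thesis by (simp add: o_def)
  qed
  have limA: "(\<lambda>j. (\<Sum>t<R j. A t $ q) / real (R j)) \<longlonglongrightarrow> \<rho> $ q" for q
  proof -
    have "(\<lambda>t. ((1 / real t) *\<^sub>R (\<Sum>s<t. A s)) $ q) \<longlonglongrightarrow> \<rho> $ q" by (intro tendsto_intros rho_lim)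
    from LIMSEQ_subseq_LIMSEQ[OF this R] show ?thesis by (simp add: o_def)
  qed
  have limS: "(\<lambda>j. (\<Sum>t<R j. Sch' t $ q) / real (R j)) \<longlonglongrightarrow> \<sigma> $ q" for q
  proof -
    have "(\<lambda>j. (avg \<circ> r) j $ q) \<longlonglongrightarrow> \<sigma> $ q" by (intro tendsto_intros lim_r)
    moreover have "(avg \<circ> r) j $ q = (\<Sum>t<R j. Sch' t $ q) / real (R j)" for j
      unfolding avg_def R_def o_def by (simp add: sum_divide_distrib del: sum.lessThan_Suc)
    ultimately show ?thesis by simp
  qed
  have evR: "\<forall>\<^sub>F j in sequentially. T \<le> R j" for T
    using eventually_ge_at_top[of T] by eventually_elim (use Rge order_trans in blast)
  have coord: "\<eta> $ q = max 0 (\<rho> $ q - \<sigma> $ q)" for q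
  proof (cases "\<eta> $ q = 0")
    case True
    define c where "c = (\<Sum>t<T1. A t $ q - Sch' t $ q)"
    have lb: "T \<ge> T1 \<Longrightarrow> X T $ q \<ge> (\<Sum>t<T. A t $ q - Sch' t $ q) - c" for T
    proof (induction T rule: dec_induct)
      case base then show ?case using xnn[of T1 q] by (simp add: c_def)
    next
      case (step T)
      have "X (Suc T) $ q \<ge> X T $ q + A T $ q - Sch T $ q" using stp[of T] by (simp add: min_def)
      then show ?case using step Sch'_eq[of T] by simp
    qed
    have "\<rho> $ q - \<sigma> $ q - 0 \<le> \<eta> $ q"
    proof (rule tendsto_le[OF _ limX])
      show "(\<lambda>j. (\<Sum>t<R j. A t $ q) / real (R j) - (\<Sum>t<R j. Sch' t $ q) / real (R j) - c / real (R j)) \<longlonglongrightarrow> \<rho> $ q - \<sigma> $ q - 0"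
        by (intro tendsto_intros limA limS LIMSEQ_subseq_LIMSEQ[OF lim_const_over_n R, unfolded o_def])
      show "\<forall>\<^sub>F j in sequentially. (\<Sum>t<R j. A t $ q) / real (R j) - (\<Sum>t<R j. Sch' t $ q) / real (R j) - c / real (R j) \<le> X (R j) $ q / real (R j)"
        using evR[of "Suc T1"]
      proof eventually_elim
        case (elim j)
        then have "(\<Sum>t<R j. A t $ q - Sch' t $ q) - c \<le> X (R j) $ q" using lb[of "R j"] by simp
        then have "((\<Sum>t<R j. A t $ q) - (\<Sum>t<R j. Sch' t $ q) - c) / real (R j) \<le> X (R j) $ q / real (R j)"
          by (simp add: sum_subtractf divide_right_mono)
        then show ?case by (simp add: diff_divide_distrib)
      qed
    qed simp
    then show ?thesis using True by simp
  next
    case False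
    then have epos: "0 < \<eta> $ q" using eta_nonneg by (metis nonneg_vec_def order_le_less)
    have "\<forall>\<^sub>F t in sequentially. smax q \<le> X t $ q"
    proof -
      have "(\<lambda>t. ((1 / real t) *\<^sub>R X t) $ q) \<longlonglongrightarrow> \<eta> $ q" by (intro tendsto_intros conv)
      then have e1: "\<forall>\<^sub>F t in sequentially. \<eta> $ q / 2 < X t $ q / real t"
        using epos by (intro order_tendstoD(1)) auto
      have e2: "\<forall>\<^sub>F t in sequentially. 2 * \<bar>smax q\<bar> / \<eta> $ q < real t"
      proof -
        obtain n0 :: nat where n0: "2 * \<bar>smax q\<bar> / \<eta> $ q < real n0" using reals_Archimedean2 by blast
        show ?thesis using eventually_ge_at_top[of n0] by eventually_elim (use n0 in auto)
      qed
      from e1 e2 show ?thesis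
      proof eventually_elim
        case (elim t)
        have tpos: "0 < real t" using elim(2) epos by (smt (verit) divide_nonneg_pos abs_ge_zero)
        have "\<eta> $ q / 2 * real t < X t $ q" using elim(1) tpos by (simp add: field_simps)
        moreover have "smax q \<le> \<eta> $ q / 2 * real t" using elim(2) epos
          by (simp add: field_simps)
        ultimately show ?case by simp
      qed
    qed
    then obtain T2' where T2': "\<And>t. t \<ge> T2' \<Longrightarrow> smax q \<le> X t $ q" by (auto simp: eventually_sequentially)
    define T2 where "T2 = max T1 T2'"
    define c where "c = X T2 $ q - (\<Sum>t<T2. A t $ q - Sch' t $ q)"
    have eqX: "T \<ge> T2 \<Longrightarrow> X T $ q = (\<Sum>t<T. A t $ q - Sch' t $ q) + c" for T
    proof (induction T rule: dec_induct)
      case base then show ?case by (simp add: c_def)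
    next
      case (step T)
      have "T \<ge> T1" "T \<ge> T2'" using step(1) by (auto simp: T2_def)
      then have "min (Sch T $ q) (X T $ q) = Sch T $ q" using T2'[of T] Sch_b[of T q] by simp
      then have "X (Suc T) $ q = X T $ q + A T $ q - Sch' T $ q" using stp[of T] Sch'_eq[of T] \<open>T \<ge> T1\<close> by simp
      then show ?case using step by simp
    qed
    have L2: "(\<lambda>j. (\<Sum>t<R j. A t $ q) / real (R j) - (\<Sum>t<R j. Sch' t $ q) / real (R j) + c / real (R j)) \<longlonglongrightarrow> \<rho> $ q - \<sigma> $ q + 0"
      by (intro tendsto_intros limA limS LIMSEQ_subseq_LIMSEQ[OF lim_const_over_n R, unfolded o_def])
    have "\<forall>\<^sub>F j in sequentially. (\<Sum>t<R j. A t $ q) / real (R j) - (\<Sum>t<R j. Sch' t $ q) / real (R j) + c / real (R j) = X (R j) $ q / real (R j)"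
      using evR[of "Suc T2"]
    proof eventually_elim
      case (elim j)
      then have "X (R j) $ q = (\<Sum>t<R j. A t $ q) - (\<Sum>t<R j. Sch' t $ q) + c" using eqX[of "R j"] by (simp add: sum_subtractf)
      then show ?case by (simp add: add_divide_distrib diff_divide_distrib)
    qed
    from Lim_transform_eventually[OF L2 this] have "(\<lambda>j. X (R j) $ q / real (R j)) \<longlonglongrightarrow> \<rho> $ q - \<sigma> $ q" by simp
    from LIMSEQ_unique[OF limX[of q] this] have "\<eta> $ q = \<rho> $ q - \<sigma> $ q" .
    then show ?thesis using epos by simp
  qed
  obtain \<alpha> :: "nat \<Rightarrow> real" where al: "\<forall>m. 0 \<le> \<alpha> m" "\<forall>m. m \<notin> F \<longrightarrow> \<alpha> m = 0" "sum \<alpha> F = 1" "(\<Sum>m\<in>F. \<alpha> m *\<^sub>R S m) = \<sigma>"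
    using hull_repr[OF finF, of \<sigma> S] \<sigma>K unfolding K_def by blast
  have s1: "(\<Sum>m<N. \<alpha> m) = 1" using al FN by (metis (no_types, lifting) DiffD2 finite_lessThan sum.mono_neutral_right)
  have s2: "(\<Sum>m<N. \<alpha> m *\<^sub>R S m) = \<sigma>"
  proof -
    have "(\<Sum>m<N. \<alpha> m *\<^sub>R S m) = (\<Sum>m\<in>F. \<alpha> m *\<^sub>R S m)"
      using al FN by (intro sum.mono_neutral_right) auto
    then show ?thesis using al by simp
  qed
  show ?thesis
  proof (intro exI conjI)
    show "\<forall>m<N. 0 \<le> \<alpha> m" using al by simp
    show "(\<Sum>m<N. \<alpha> m) = 1" by (rule s1)
    show "\<eta> = pos_part (\<rho> - (\<Sum>m<N. \<alpha> m *\<^sub>R S m))"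
      unfolding s2 by (simp add: vec_eq_iff pos_part_def coord)
    show "nonneg_vec v" by (rule v_nn)
    show "\<forall>m<N. 0 < \<alpha> m \<longrightarrow> (\<forall>k<N. inner v (S k) \<le> inner v (S m))"
      using al by (auto simp: F_def)
    show "\<forall>q. v $ q = 0 \<longleftrightarrow> \<eta> $ q = 0" using v_zero by blast
  qed
qed



theorem proposition3:
  fixes S :: "nat \<Rightarrow> real^'q" and N :: nat
    and A :: "nat \<Rightarrow> real^'q" and Abar \<rho> \<eta> :: "real^'q"
  assumes N_pos: "0 < N"
    and S_nonneg: "\<forall>n<N. nonneg_vec (S n)"
    and A_bounds: "\<forall>t q. 0 \<le> A t $ q \<and> A t $ q \<le> Abar $ q"
    and rho_lim: "(\<lambda>t. (1 / real t) *\<^sub>R (\<Sum>s<t. A s)) \<longlonglongrightarrow> \<rho>"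
    and rho_pos: "\<forall>q. 0 < \<rho> $ q"
    and not_stable: "\<rho> \<notin> stab_region S N"
    and eta_nonneg: "nonneg_vec \<eta>"
  shows "(\<exists>D. positive_diagonal D \<and>
            (\<forall>Sch X. maxweight_traj S N D A Sch X \<longrightarrow>
               (\<lambda>t. (1 / real t) *\<^sub>R X t) \<longlonglongrightarrow> \<eta>))
    \<longleftrightarrow>
         (\<exists>\<alpha>::nat \<Rightarrow> real. (\<forall>m<N. 0 \<le> \<alpha> m) \<and> (\<Sum>m<N. \<alpha> m) = 1 \<and>
            \<eta> = pos_part (\<rho> - (\<Sum>m<N. \<alpha> m *\<^sub>R S m)) \<and>
            (\<exists>v. nonneg_vec v \<and>
               (\<forall>m<N. 0 < \<alpha> m \<longrightarrow> (\<forall>k<N. inner v (S k) \<le> inner v (S m))) \<and>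
               (\<forall>q. v $ q = 0 \<longleftrightarrow> \<eta> $ q = 0)))"
proof
  assume "\<exists>D. positive_diagonal D \<and>
            (\<forall>Sch X. maxweight_traj S N D A Sch X \<longrightarrow>
               (\<lambda>t. (1 / real t) *\<^sub>R X t) \<longlonglongrightarrow> \<eta>)"
  then obtain D where posD: "positive_diagonal D"
    and allc: "\<And>Sch X. maxweight_traj S N D A Sch X \<Longrightarrow> (\<lambda>t. (1 / real t) *\<^sub>R X t) \<longlonglongrightarrow> \<eta>"
    by blast
  define ch where "ch w = (SOME n. n < N \<and> (\<forall>k<N. inner (S k) w \<le> inner (S n) w))" for w
  have ch: "ch w < N \<and> (\<forall>k<N. inner (S k) w \<le> inner (S (ch w)) w)" for w
    unfolding ch_def by (rule someI_ex) (rule argmax_exists[OF N_pos])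
  define Xc where "Xc = rec_nat 0 (\<lambda>t x. x + A t - (\<chi> q. min (S (ch (D *v x)) $ q) (x $ q)))"
  define Sc where "Sc t = S (ch (D *v Xc t))" for t
  have tr: "maxweight_traj S N D A Sc Xc"
  proof -
    have "Xc 0 = 0" by (simp add: Xc_def)
    moreover have "\<forall>t. Xc (Suc t) = Xc t + A t - (\<chi> q. min (Sc t $ q) (Xc t $ q))" by (simp add: Xc_def Sc_def)
    moreover have "\<forall>t. (\<exists>n<N. Sc t = S n) \<and> (\<forall>k<N. inner (S k) (D *v Xc t) \<le> inner (Sc t) (D *v Xc t))"
      using ch unfolding Sc_def by blast
    ultimately show ?thesis unfolding maxweight_traj_def by blast
  qed
  show "\<exists>\<alpha>::nat \<Rightarrow> real. (\<forall>m<N. 0 \<le> \<alpha> m) \<and> (\<Sum>m<N. \<alpha> m) = 1 \<and>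
            \<eta> = pos_part (\<rho> - (\<Sum>m<N. \<alpha> m *\<^sub>R S m)) \<and>
            (\<exists>v. nonneg_vec v \<and>
               (\<forall>m<N. 0 < \<alpha> m \<longrightarrow> (\<forall>k<N. inner v (S k) \<le> inner v (S m))) \<and>
               (\<forall>q. v $ q = 0 \<longleftrightarrow> \<eta> $ q = 0))"
    by (rule from_traj[OF N_pos S_nonneg A_bounds rho_lim eta_nonneg posD tr allc[OF tr]])
next
  assume "\<exists>\<alpha>::nat \<Rightarrow> real. (\<forall>m<N. 0 \<le> \<alpha> m) \<and> (\<Sum>m<N. \<alpha> m) = 1 \<and>
            \<eta> = pos_part (\<rho> - (\<Sum>m<N. \<alpha> m *\<^sub>R S m)) \<and>
            (\<exists>v. nonneg_vec v \<and>
               (\<forall>m<N. 0 < \<alpha> m \<longrightarrow> (\<forall>k<N. inner v (S k) \<le> inner v (S m))) \<and>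
               (\<forall>q. v $ q = 0 \<longleftrightarrow> \<eta> $ q = 0))"
  then obtain \<alpha> v where a: "\<forall>m<N. 0 \<le> \<alpha> m" "(\<Sum>m<N. \<alpha> m) = 1"
      "\<eta> = pos_part (\<rho> - (\<Sum>m<N. \<alpha> m *\<^sub>R S m))" and vv: "nonneg_vec v"
      "\<forall>m<N. 0 < \<alpha> m \<longrightarrow> (\<forall>k<N. inner v (S k) \<le> inner v (S m))"
      "\<forall>q. v $ q = 0 \<longleftrightarrow> \<eta> $ q = 0"
    by blast
  show "\<exists>D. positive_diagonal D \<and>
            (\<forall>Sch X. maxweight_traj S N D A Sch X \<longrightarrow>
               (\<lambda>t. (1 / real t) *\<^sub>R X t) \<longlonglongrightarrow> \<eta>)"
    by (rule if_dir[OF N_pos S_nonneg A_bounds rho_lim eta_nonneg a vv])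
qed

end
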